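(* Suppose $A$ is a finite set and $E_1,E_2,\ldots,E_\ell$ are $\ell>1$ subsets of $A$ such that: (i) for all $1\leq i<\ell$, $E_i\not\subseteq E_{i+1}$ and $E_{i+1}\not\subseteq E_i$; (ii) for all $a\in A$ and $1\leq i<j\leq\ell$, if $a\in E_i\cap E_j$ then $a\in E_k$ for all $i\leq k\leq j$. Then $\ell\leq|A|$. *)

theory Defs
  imports Main
begin

end

theory Submission
  imports Defs
begin

theorem lemma18:
  fixes A :: "'a set" and E :: "nat \<Rightarrow> 'a set" and l :: nat
  assumes "finite A"
    and "l > 1"
    and "\<And>i. 1 \<le> i \<Longrightarrow> i \<le> l \<Longrightarrow> E i \<subseteq> A"
    and "\<And>i. 1 \<le> i \<Longrightarrow> i < l \<Longrightarrow> \<not> E i \<subseteq> E (i + 1) \<and> \<not> E (i + 1) \<subseteq> E i"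
    and "\<And>a i j k. a \<in> A \<Longrightarrow> 1 \<le> i \<Longrightarrow> i < j \<Longrightarrow> j \<le> l \<Longrightarrow>
           a \<in> E i \<inter> E j \<Longrightarrow> i \<le> k \<Longrightarrow> k \<le> j \<Longrightarrow> a \<in> E k"
  shows "l \<le> card A"
proof -
  define f where "f i = (if i < l then (SOME a. a \<in> E i - E (i+1)) else (SOME a. a \<in> E l - E (l - 1)))" for i
  have fl: "f i \<in> E i \<and> f i \<notin> E (i+1)" if "1 \<le> i" "i < l" for i
  proof -
    have "\<exists>a. a \<in> E i - E (i+1)" using assms(4)[OF that] by blast
    then show ?thesis unfolding f_def using that by simp (metis (mono_tags, lifting) someI_ex)
  qed
  have fL: "f l \<in> E l"
  proof -
    have "\<exists>a. a \<in> E l - E (l - 1)" proof -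
      have "\<not> E (l-1+1) \<subseteq> E (l-1)" using assms(4)[of "l-1"] assms(2) by auto
      moreover have "l-1+1 = l" using assms(2) by simp
      ultimately show ?thesis by auto
    qed
    then show ?thesis unfolding f_def by simp (metis (mono_tags, lifting) DiffE someI_ex)
  qed
  have fin: "f i \<in> E i" if "1 \<le> i" "i \<le> l" for i
    using fl fL that by (cases "i < l") auto
  have fA: "f i \<in> A" if "1 \<le> i" "i \<le> l" for i
    using fin[OF that] assms(3)[OF that] by blast
  have notin: "f i \<notin> E j" if "1 \<le> i" "i < j" "j \<le> l" for i j
  proof
    assume "f i \<in> E j"
    then have "f i \<in> E (i+1)"
      using assms(5)[of "f i" i j "i+1"] fA[of i] fl[of i] that by auto
    then show False using fl[of i] that by auto
  qed
  have "inj_on f {1..l}"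
  proof (rule inj_onI)
    fix x y assume x: "x \<in> {1..l}" and y: "y \<in> {1..l}" and e: "f x = f y"
    show "x = y"
    proof (rule ccontr)
      assume "x \<noteq> y"
      then consider "x < y" | "y < x" by linarith
      then show False
      proof cases
        case 1 then show ?thesis using notin[of x y] fin[of y] x y e by auto
      next
        case 2 then show ?thesis using notin[of y x] fin[of x] x y e by auto
      qed
    qed
  qed
  moreover have "f ` {1..l} \<subseteq> A" using fA by auto
  ultimately have "card {1..l} \<le> card A" using card_inj_on_le assms(1) by blast
  then show ?thesis by simp
qed

end
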